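(* For any non-null classifier $\delta$, any $t\ge0$, any $F$ satisfying the assumptions below, and any $\phi\in(\tfrac12,1]$, the reward $r^*=k_\mu^*(t,F)/\rho(\delta,\phi)$ is a Condorcet winner: for every other reward $r\in\mathbb{R}$, a majority of individuals (a set of measure at least one half) prefers $r^*$ to $r$, where each individual evaluates rewards by the payoff $U_i(\cdot)$ below.
   Context: A unit mass of individuals $i\in[0,1]$ have privately known costs $\gamma_i\in\mathbb{R}$ of choosing $\beta_i=1$ (compliance) rather than $\beta_i=0$, distributed according to a continuously differentiable CDF $F$ with log-concave density $f$ of full support on $\mathbb{R}$. A classifier $\delta=(\delta_1,\delta_0)\in[0,1]^2$ assigns $d_i$ with $\Pr[d_i=s_i\mid s_i]=\delta_{s_i}$, where $\Pr[s_i=\beta_i]=\phi$. Let $\rho=\rho(\delta,\phi)=(\delta_1+\delta_0-1)(2\phi-1)$; $\delta$ is non-null if $\rho\neq0$. Individuals with $d_i=1$ receive reward $r$, financed by an equal tax on all (budget balance), and each gets $t\pi$ with $\pi=F(r\rho)$ the compliance rate (individuals comply iff $\gamma_i\le r\rho$). Individual $i$'s payoff from reward $r$ is $U_i(r)=-\gamma_i+r\rho(1-F(r\rho))+tF(r\rho)$ if $\gamma_i\le r\rho$, and $U_i(r)=-r\rho F(r\rho)+tF(r\rho)$ otherwise. Define $k_0,k_1$ by $k_0=t-\frac{F(k_0)}{f(k_0)}$, $k_1=t+\frac{1-F(k_1)}{f(k_1)}$, and for an individual with cost $\gamma$ let $k^*(\gamma)=k_1$ if $\gamma\le k_0F(k_0)+k_1(1-F(k_1))+t(F(k_1)-F(k_0))$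 and $k_0$ otherwise. The median individual $\mu$ has cost $\gamma_\mu$ with $F(\gamma_\mu)=\tfrac12$, and $k_\mu^*(t,F)=k^*(\gamma_\mu)$. *)

theory Defs
  imports "HOL-Analysis.Analysis"
begin

definition cost_dist :: "(real \<Rightarrow> real) \<Rightarrow> (real \<Rightarrow> real) \<Rightarrow> bool" where
  "cost_dist F f \<longleftrightarrow>
     mono F \<and> (F \<longlongrightarrow> 0) at_bot \<and> (F \<longlongrightarrow> 1) at_top \<and>
     (\<forall>x. (F has_real_derivative f x) (at x)) \<and> continuous_on UNIV f \<and>
     (\<forall>x. f x > 0) \<and> concave_on UNIV (\<lambda>x. ln (f x))"

definition rho :: "real \<Rightarrow> real \<Rightarrow> real \<Rightarrow> real" where
  "rho \<delta>1 \<delta>0 \<phi> = (\<delta>1 + \<delta>0 - 1) * (2 * \<phi> - 1)"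

definition payoff :: "(real \<Rightarrow> real) \<Rightarrow> real \<Rightarrow> real \<Rightarrow> real \<Rightarrow> real \<Rightarrow> real" where
  "payoff F t \<rho> r \<gamma> =
     (if \<gamma> \<le> r * \<rho> then - \<gamma> + r * \<rho> * (1 - F (r * \<rho>)) + t * F (r * \<rho>)
      else - r * \<rho> * F (r * \<rho>) + t * F (r * \<rho>))"

definition kstar :: "(real \<Rightarrow> real) \<Rightarrow> real \<Rightarrow> real \<Rightarrow> real \<Rightarrow> real \<Rightarrow> real" where
  "kstar F t k0 k1 \<gamma> =
     (if \<gamma> \<le> k0 * F k0 + k1 * (1 - F k1) + t * (F k1 - F k0) then k1 else k0)"

end

theory Submission
  imports Defs "HOL-Probability.Probability" "HOL-Real_Asymp.Real_Asymp"
begin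

lemma concave_four:
  fixes g :: "real \<Rightarrow> real"
  assumes cv: "concave_on UNIV g" and xy: "x \<le> y" and s: "s \<ge> 0"
  shows "g (x - s) + g y \<le> g x + g (y - s)"
proof (cases "y = x - s")
  case True
  then have "s = 0" "x = y" using xy s by auto
  then show ?thesis by simp
next
  case False
  define a where "a = x - s"
  define d where "d = y"
  have ad: "a < d" using False xy s unfolding a_def d_def by auto
  define l where "l = (d - x) / (d - a)"
  have l0: "0 \<le> l" and l1: "l \<le> 1" using ad xy s unfolding l_def a_def d_def
    by (auto simp: field_simps)
  have ld: "l * (d - a) = d - x" using ad unfolding l_def by simp
  have b: "(1 - l) *\<^sub>R d + l *\<^sub>R a = x" using ld by (simp add: algebra_simps)
  have c: "(1 - l) *\<^sub>R a + l *\<^sub>R d = y - s" using ld unfolding a_def d_def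
    by (simp add: algebra_simps)
  have 1: "g ((1 - l) *\<^sub>R d + l *\<^sub>R a) \<ge> (1 - l) * g d + l * g a"
    by (rule concave_onD[OF cv l0 l1]) auto
  have 2: "g ((1 - l) *\<^sub>R a + l *\<^sub>R d) \<ge> (1 - l) * g a + l * g d"
    by (rule concave_onD[OF cv l0 l1]) auto
  have 3: "g x \<ge> (1 - l) * g d + l * g a" using 1 b by simp
  have 4: "g (y - s) \<ge> (1 - l) * g a + l * g d" using 2 c by simp
  have 5: "(1 - l) * g d + l * g a + ((1 - l) * g a + l * g d) = g a + g d"
    by (simp add: algebra_simps)
  from 3 4 5 show ?thesis unfolding a_def d_def by linarith
qed

lemma logconc_mult:
  assumes cd: "cost_dist F f" and xy: "x \<le> y" and s: "s \<ge> 0"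
  shows "f (x - s) * f y \<le> f x * f (y - s)"
proof -
  have pos: "\<And>z. f z > 0" using cd unfolding cost_dist_def by auto
  have cv: "concave_on UNIV (\<lambda>x. ln (f x))" using cd unfolding cost_dist_def by auto
  have "ln (f (x - s)) + ln (f y) \<le> ln (f x) + ln (f (y - s))"
    using concave_four[OF cv xy s] by simp
  moreover have "ln (f (x - s) * f y) = ln (f (x - s)) + ln (f y)"
    using pos by (intro ln_mult_pos) auto
  moreover have "ln (f x * f (y - s)) = ln (f x) + ln (f (y - s))"
    using pos by (intro ln_mult_pos) auto
  ultimately have "ln (f (x - s) * f y) \<le> ln (f x * f (y - s))" by simp
  then show ?thesis using pos by (simp add: mult_pos_pos)
qed

lemma ratio_lower:
  assumes cd: "cost_dist F f" and xy: "x \<le> y"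
  shows "F x * f y \<le> F y * f x"
proof -
  have pos: "\<And>z. f z > 0" and der: "\<And>z. (F has_real_derivative f z) (at z)"
    and bot: "(F \<longlongrightarrow> 0) at_bot"
    using cd unfolding cost_dist_def by auto
  define P where "P u = f x * F (y - u) - f y * F (x - u)" for u
  have dP: "(P has_real_derivative (- f x * f (y - u) + f y * f (x - u))) (at u)" for u
    unfolding P_def
    by (auto intro!: derivative_eq_intros DERIV_chain2[OF der])
  have mono: "P u \<le> P 0" if "u \<ge> 0" for u
  proof (rule DERIV_nonpos_imp_nonincreasing[OF that])
    fix z assume "0 \<le> z" "z \<le> u"
    then show "\<exists>y. DERIV P z :> y \<and> y \<le> 0"
      using dP[of z] logconc_mult[OF cd xy, of z] by (intro exI[of _ "- f x * f (y - z) + f y * f (x - z)"]) (auto simp: mult.commute)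
  qed
  have l1: "((\<lambda>u. y - u) \<longlongrightarrow> 0) at_top \<or> True" by simp
  have fy: "filterlim (\<lambda>u::real. y - u) at_bot at_top" by real_asymp
  have fx: "filterlim (\<lambda>u::real. x - u) at_bot at_top" by real_asymp
  have "(P \<longlongrightarrow> f x * 0 - f y * 0) at_top"
    unfolding P_def
    by (intro tendsto_intros filterlim_compose[OF bot fy] filterlim_compose[OF bot fx])
  then have "(P \<longlongrightarrow> 0) at_top" by simp
  then have "0 \<le> P 0"
    by (rule tendsto_upperbound) (auto intro!: mono simp: eventually_at_top_linorder)
  then show ?thesis unfolding P_def by (simp add: mult.commute)
qed

lemma ratio_upper:
  assumes cd: "cost_dist F f" and xy: "x \<le> y"
  shows "(1 - F y) * f x \<le> (1 - F x) * f y"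
proof -
  have pos: "\<And>z. f z > 0" and der: "\<And>z. (F has_real_derivative f z) (at z)"
    and top: "(F \<longlongrightarrow> 1) at_top"
    using cd unfolding cost_dist_def by auto
  define Q where "Q u = f y * (1 - F (x + u)) - f x * (1 - F (y + u))" for u
  have dQ: "(Q has_real_derivative (- f y * f (x + u) + f x * f (y + u))) (at u)" for u
    unfolding Q_def
    by (auto intro!: derivative_eq_intros DERIV_chain2[OF der])
  have lm: "f (y + u) * f x \<le> f y * f (x + u)" if "u \<ge> 0" for u
    using logconc_mult[OF cd _ that, of "x + u" "y + u"] xy by (simp add: mult.commute)
  have mono: "Q u \<le> Q 0" if "u \<ge> 0" for u
  proof (rule DERIV_nonpos_imp_nonincreasing[OF that])
    fix z assume "0 \<le> z" "z \<le> u"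
    then show "\<exists>y. DERIV Q z :> y \<and> y \<le> 0"
      using dQ[of z] lm[of z] by (intro exI[of _ "- f y * f (x + z) + f x * f (y + z)"]) (auto simp: mult.commute)
  qed
  have fy: "filterlim (\<lambda>u::real. y + u) at_top at_top" by real_asymp
  have fx: "filterlim (\<lambda>u::real. x + u) at_top at_top" by real_asymp
  have "(Q \<longlongrightarrow> f y * (1 - 1) - f x * (1 - 1)) at_top"
    unfolding Q_def
    by (intro tendsto_intros filterlim_compose[OF top fy] filterlim_compose[OF top fx])
  then have "(Q \<longlongrightarrow> 0) at_top" by simp
  then have "0 \<le> Q 0"
    by (rule tendsto_upperbound) (auto intro!: mono simp: eventually_at_top_linorder)
  then show ?thesis unfolding Q_def by (simp add: mult.commute)
qed


lemma G_max:
  assumes cd: "cost_dist F f" and k0: "k0 = t - F k0 / f k0"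
  shows "(t - k) * F k \<le> (t - k0) * F k0"
proof -
  have pos: "\<And>z. f z > 0" and der: "\<And>z. (F has_real_derivative f z) (at z)"
    using cd unfolding cost_dist_def by auto
  have "F k0 / f k0 = t - k0" using k0 by linarith
  then have e: "F k0 = (t - k0) * f k0" using pos[of k0] by (simp add: divide_eq_eq)
  define G where "G k = (t - k) * F k" for k
  have dG: "(G has_real_derivative (- F k + (t - k) * f k)) (at k)" for k
    unfolding G_def by (auto intro!: derivative_eq_intros der)
  show ?thesis
  proof (cases "k \<le> k0")
    case True
    have "G k \<le> G k0"
    proof (rule DERIV_nonneg_imp_nondecreasing[OF True])
      fix z assume z: "k \<le> z" "z \<le> k0"
      have "F z * f k0 \<le> F k0 * f z" using ratio_lower[OF cd z(2)] .
      then have "F z * f k0 \<le> ((t - k0) * f z) * f k0" using e by (simp add: algebra_simps)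
      then have "F z \<le> (t - k0) * f z" using pos[of k0] by simp
      also have "\<dots> \<le> (t - z) * f z" using z pos[of z] by (intro mult_right_mono) auto
      finally show "\<exists>y. DERIV G z :> y \<and> y \<ge> 0"
        using dG[of z] by (intro exI[of _ "- F z + (t - z) * f z"]) auto
    qed
    then show ?thesis unfolding G_def .
  next
    case False
    then have le: "k0 \<le> k" by simp
    have "G k \<le> G k0"
    proof (rule DERIV_nonpos_imp_nonincreasing[OF le])
      fix z assume z: "k0 \<le> z" "z \<le> k"
      have "F k0 * f z \<le> F z * f k0" using ratio_lower[OF cd z(1)] .
      then have "((t - k0) * f z) * f k0 \<le> F z * f k0" using e by (simp add: algebra_simps)
      then have "(t - k0) * f z \<le> F z" using pos[of k0] by simp
      moreover have "(t - z) * f z \<le> (t - k0) * f z" using z pos[of z] by (intro mult_right_mono) auto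
      ultimately show "\<exists>y. DERIV G z :> y \<and> y \<le> 0"
        using dG[of z] by (intro exI[of _ "- F z + (t - z) * f z"]) auto
    qed
    then show ?thesis unfolding G_def .
  qed
qed

lemma H_max:
  assumes cd: "cost_dist F f" and k1: "k1 = t + (1 - F k1) / f k1"
  shows "(t - k) * F k + k \<le> (t - k1) * F k1 + k1"
proof -
  have pos: "\<And>z. f z > 0" and der: "\<And>z. (F has_real_derivative f z) (at z)"
    using cd unfolding cost_dist_def by auto
  have "(1 - F k1) / f k1 = k1 - t" using k1 by linarith
  then have e: "1 - F k1 = (k1 - t) * f k1" using pos[of k1] by (simp add: divide_eq_eq)
  define H where "H k = (t - k) * F k + k" for k
  have dH: "(H has_real_derivative (- F k + (t - k) * f k + 1)) (at k)" for k
    unfolding H_def by (auto intro!: derivative_eq_intros der)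
  show ?thesis
  proof (cases "k \<le> k1")
    case True
    have "H k \<le> H k1"
    proof (rule DERIV_nonneg_imp_nondecreasing[OF True])
      fix z assume z: "k \<le> z" "z \<le> k1"
      have "(1 - F k1) * f z \<le> (1 - F z) * f k1" using ratio_upper[OF cd z(2)] .
      then have "((k1 - t) * f z) * f k1 \<le> (1 - F z) * f k1" using e by (simp add: algebra_simps)
      then have "(k1 - t) * f z \<le> 1 - F z" using pos[of k1] by simp
      moreover have "(z - t) * f z \<le> (k1 - t) * f z" using z pos[of z] by (intro mult_right_mono) auto
      ultimately show "\<exists>y. DERIV H z :> y \<and> y \<ge> 0"
        using dH[of z] by (intro exI[of _ "- F z + (t - z) * f z + 1"]) (auto simp: algebra_simps)
    qed
    then show ?thesis unfolding H_def .
  next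
    case False
    then have le: "k1 \<le> k" by simp
    have "H k \<le> H k1"
    proof (rule DERIV_nonpos_imp_nonincreasing[OF le])
      fix z assume z: "k1 \<le> z" "z \<le> k"
      have "(1 - F z) * f k1 \<le> (1 - F k1) * f z" using ratio_upper[OF cd z(1)] .
      then have "(1 - F z) * f k1 \<le> ((k1 - t) * f z) * f k1" using e by (simp add: algebra_simps)
      then have "1 - F z \<le> (k1 - t) * f z" using pos[of k1] by simp
      moreover have "(k1 - t) * f z \<le> (z - t) * f z" using z pos[of z] by (intro mult_right_mono) auto
      ultimately show "\<exists>y. DERIV H z :> y \<and> y \<le> 0"
        using dH[of z] by (intro exI[of _ "- F z + (t - z) * f z + 1"]) (auto simp: algebra_simps)
    qed
    then show ?thesis unfolding H_def .
  qed
qed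


lemma payoff_max:
  "payoff F t \<rho> r \<gamma> = max ((t - r * \<rho>) * F (r * \<rho>)) ((t - r * \<rho>) * F (r * \<rho>) + r * \<rho> - \<gamma>)"
  unfolding payoff_def by (auto simp: algebra_simps max_def)

theorem proposition7:
  fixes F f :: "real \<Rightarrow> real" and \<delta>1 \<delta>0 \<phi> t k0 k1 \<gamma>\<mu> :: real
  assumes "cost_dist F f"
    and "0 \<le> \<delta>1" "\<delta>1 \<le> 1" "0 \<le> \<delta>0" "\<delta>0 \<le> 1"
    and "rho \<delta>1 \<delta>0 \<phi> \<noteq> 0"
    and "t \<ge> 0"
    and "1/2 < \<phi>" "\<phi> \<le> 1"
    and "k0 = t - F k0 / f k0"
    and "k1 = t + (1 - F k1) / f k1"
    and "F \<gamma>\<mu> = 1/2"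
  shows "\<forall>r. r \<noteq> kstar F t k0 k1 \<gamma>\<mu> / rho \<delta>1 \<delta>0 \<phi> \<longrightarrow>
           measure (interval_measure F)
             {\<gamma>. payoff F t (rho \<delta>1 \<delta>0 \<phi>) r \<gamma>
                 \<le> payoff F t (rho \<delta>1 \<delta>0 \<phi>) (kstar F t k0 k1 \<gamma>\<mu> / rho \<delta>1 \<delta>0 \<phi>) \<gamma>}
           \<ge> 1/2"
proof (intro allI impI)
  fix r
  note cd = assms(1)
  have monoF: "mono F" and bot: "(F \<longlongrightarrow> 0) at_bot" and top: "(F \<longlongrightarrow> 1) at_top"
    and der: "\<And>z. (F has_real_derivative f z) (at z)"
    using cd unfolding cost_dist_def by auto
  have rc: "continuous (at_right a) F" for a
    using DERIV_isCont[OF der[of a]] by (simp add: continuous_at_imp_continuous_at_within)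
  have nd: "F x \<le> F y" if "x \<le> y" for x y using monoF that by (simp add: mono_def)
  define M where "M = interval_measure F"
  have rd: "real_distribution M" unfolding M_def
    by (rule real_distribution_interval_measure[OF nd rc bot top])
  then interpret prob_space M by (simp add: real_distribution_def)
  have sets: "sets M = sets borel" unfolding M_def by simp
  have spc: "space M = UNIV" using sets sets_eq_imp_space_eq by fastforce
  define \<rho> where "\<rho> = rho \<delta>1 \<delta>0 \<phi>"
  define ks where "ks = kstar F t k0 k1 \<gamma>\<mu>"
  define k where "k = r * \<rho>"
  have ksr: "ks / \<rho> * \<rho> = ks" using assms(6) unfolding \<rho>_def by simp
  define G where "G x = (t - x) * F x" for x
  define H where "H x = (t - x) * F x + x" for x
  have Gm: "G x \<le> G k0" for x unfolding G_def by (rule G_max[OF cd assms(10)])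
  have Hm: "H x \<le> H k1" for x unfolding H_def by (rule H_max[OF cd assms(11)])
  have pay: "payoff F t \<rho> q \<gamma> = max (G (q * \<rho>)) (H (q * \<rho>) - \<gamma>)" for q \<gamma>
    unfolding payoff_max G_def H_def by simp
  define S where "S = {\<gamma>. payoff F t \<rho> r \<gamma> \<le> payoff F t \<rho> (ks / \<rho>) \<gamma>}"
  have S': "S = {\<gamma>. max (G k) (H k - \<gamma>) \<le> max (G ks) (H ks - \<gamma>)}"
    unfolding S_def pay ksr k_def by simp
  have "closed S" unfolding S'
    by (intro closed_Collect_le continuous_intros)
  then have Ssets: "S \<in> sets M" unfolding sets by (rule borel_closed)
  define c where "c = k0 * F k0 + k1 * (1 - F k1) + t * (F k1 - F k0)"
  have cHG: "c = H k1 - G k0" unfolding c_def H_def G_def by (simp add: algebra_simps)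
  have "measure M S \<ge> 1/2"
  proof (cases "\<gamma>\<mu> \<le> c")
    case True
    then have ks1: "ks = k1" unfolding ks_def kstar_def c_def by simp
    have sub: "{..\<gamma>\<mu>} \<subseteq> S"
    proof
      fix \<gamma> assume "\<gamma> \<in> {..\<gamma>\<mu>}"
      then have "\<gamma> \<le> c" using True by simp
      then have "G k0 \<le> H k1 - \<gamma>" using cHG by simp
      then have "max (G k) (H k - \<gamma>) \<le> H k1 - \<gamma>" using Gm[of k] Hm[of k] by simp
      then show "\<gamma> \<in> S" unfolding S' ks1 by (simp add: le_max_iff_disj)
    qed
    have "measure M {..\<gamma>\<mu>} = 1/2" unfolding M_def
      using measure_interval_measure_Iic[OF nd rc bot] assms(12) by simp
    then show ?thesis using finite_measure_mono[OF sub Ssets] by simp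
  next
    case False
    then have ks0: "ks = k0" unfolding ks_def kstar_def c_def by simp
    have sub: "{\<gamma>\<mu><..} \<subseteq> S"
    proof
      fix \<gamma> assume "\<gamma> \<in> {\<gamma>\<mu><..}"
      then have "\<gamma> > c" using False by simp
      then have "H k1 - \<gamma> \<le> G k0" using cHG by simp
      then have "max (G k) (H k - \<gamma>) \<le> G k0" using Gm[of k] Hm[of k] by simp
      then show "\<gamma> \<in> S" unfolding S' ks0 by (simp add: le_max_iff_disj)
    qed
    have e: "{\<gamma>\<mu><..} = space M - {..\<gamma>\<mu>}" unfolding spc by auto
    have "measure M {..\<gamma>\<mu>} = 1/2" unfolding M_def
      using measure_interval_measure_Iic[OF nd rc bot] assms(12) by simp
    then have "measure M {\<gamma>\<mu><..} = 1/2" unfolding e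
      by (subst prob_compl) (auto simp: sets)
    then show ?thesis using finite_measure_mono[OF sub Ssets] by simp
  qed
  then show "measure (interval_measure F)
             {\<gamma>. payoff F t (rho \<delta>1 \<delta>0 \<phi>) r \<gamma>
                 \<le> payoff F t (rho \<delta>1 \<delta>0 \<phi>) (kstar F t k0 k1 \<gamma>\<mu> / rho \<delta>1 \<delta>0 \<phi>) \<gamma>}
           \<ge> 1/2"
    unfolding M_def S_def \<rho>_def ks_def .
qed

end
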